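(* In the setting described in the context, fix $n$ and a piecewise constant function $\bar u^n\colon\mathbb{R}\to\Omega^n$ (with finitely many jumps) and let $u^n$ be the approximate solution constructed from $\bar u^n$ by the wave-front tracking algorithm with the approximate Riemann solver $\mathcal{R}^n$. Then for every $t>0$, every phase transition performed by $x\mapsto u^n(t,x)$ from $u_-$ to $u_+$ satisfies $(u_-,u_+)\in\mathcal{G}_{\rm e}$. Moreover, the number of phase transitions performed by $x\mapsto u^n(t,x)$, $t\ge0$, does not increase with time, and it strictly decreases if and only if two phase transitions interact. Finally, the number of phase transitions can decrease only by an even number.
   Context: Standing assumptions. Let $R_{\rm f}''>0$ and $v_{\rm f}\in C^2([0,R_{\rm f}''];\mathbb{R}_+)$ with $v_{\rm f}(R_{\rm f}'')>0$ and, for every $\rho\in[0,R_{\rm f}'']$, $v_{\rm f}'(\rho)\le0$, $v_{\rm f}(\rho)+\rho v_{\rm f}'(\rho)>0$, $2v_{\rm f}'(\rho)+\rho v_{\rm f}''(\rho)\le0$. Let $R_{\rm f}'\in\,]0,R_{\rm f}''[$ and $p\in C^2([R_{\rm f}',+\infty[;\mathbb{R})$ with $p'(\rho)>0$, $2p'(\rho)+\rho p''(\rho)>0$ for $\rho\ge R_{\rm f}'$. Assume $\rho\mapsto v_{\rm f}(\rho)+p(\rho)$ is increasing on $[R_{\rm f}',R_{\rm f}'']$ and $v_{\rm f}(\rho)<\rho p'(\rho)$ on $[R_{\rm f}',R_{\rm f}'']$. Set $V_{\max}\doteq v_{\rm f}(0)$, $V_{\rm f}\doteq v_{\rm f}(R_{\rm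 f}'')$, $W_{\max}\doteq p(R_{\rm f}'')+V_{\rm f}$, $W_{\rm c}\doteq p(R_{\rm f}')+v_{\rm f}(R_{\rm f}')$, $W_{\min}\doteq W_{\rm c}+v_{\rm f}(R_{\rm f}')-V_{\max}$, $R_{\max}\doteq p^{-1}(W_{\max})$, and fix $V_{\rm c}\in\,]0,V_{\rm f}[$. Domains. Write $u=(\rho,v)$. $\Omega_{\rm f}\doteq\{u\in[0,R_{\rm f}'']\times[V_{\rm f},V_{\max}]: v=v_{\rm f}(\rho)\}$, $\Omega_{\rm c}\doteq\{u\in[0,R_{\max}]\times[0,V_{\rm c}]: W_{\rm c}\le v+p(\rho)\le W_{\max}\}$, $\Omega_{\rm f}'\doteq\{u\in\Omega_{\rm f}:\rho<R_{\rm f}'\}$, $\Omega_{\rm f}''\doteq\{u\in\Omega_{\rm f}:\rho\in[R_{\rm f}',R_{\rm f}'']\}$, $\Omega\doteq\Omega_{\rm f}\cup\Omega_{\rm c}$. For $w\in[W_{\rm c},W_{\max}]$, $\rho_{\rm f}(w)$ is the unique $\rho\in[R_{\rm f}',R_{\rm f}'']$ with $v_{\rm f}(\rho)+p(\rho)=w$. Extended Riemann invariants: $w_1(u)=v$ on $\Omega_{\rm c}$, $w_1(u)=V_{\rm f}$ on $\Omega_{\rm f}$; $w_2(u)=v+p(\rho)$ on $\Omega_{\rm c}\cup\Omega_{\rm f}''$, $w_2(u)=W_{\rm c}+v_{\rm f}(R_{\rm f}')-v_{\rm f}(\rho)$ on $\Omega_{\rm f}'$. For $\rho_-\ne\rho_+$,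 $\sigma(u_-,u_+)\doteq(\rho_+v_+-\rho_-v_-)/(\rho_+-\rho_-)$. The model is LWR $\rho_t+(\rho v_{\rm f}(\rho))_x=0$ in $\Omega_{\rm f}$ and ARZ ($\rho_t+(\rho v)_x=0$, $[\rho(v+p(\rho))]_t+[\rho(v+p(\rho))v]_x=0$) in $\Omega_{\rm c}$. A phase transition is a discontinuity between a state in $\Omega_{\rm f}$ and a state in $\Omega_{\rm c}$. $\mathcal{G}_{\rm e}\doteq\mathcal{G}_1\cup\mathcal{G}_2\cup\mathcal{G}_3$ with $\mathcal{G}_1\doteq\{(u_-,u_+)\in\Omega_{\rm f}'\times\Omega_{\rm c}:[w_2(u_+)-W_{\rm c}]\rho_-=0\}$, $\mathcal{G}_2\doteq\{(u_-,u_+)\in\Omega_{\rm f}''\times\Omega_{\rm c}:w_2(u_-)=w_2(u_+)\}$, $\mathcal{G}_3\doteq\{(u_-,u_+)\in\Omega_{\rm c}\times\Omega_{\rm f}'':w_2(u_-)=w_2(u_+),\ v_-=V_{\rm c}\}$. Riemann solver $\mathcal{R}$. $\mathcal{R}_{\rm LWR}[u_\ell,u_r]$ is the self-similar Lax solution of the LWR Riemann problem ($u_\ell,u_r\in\Omega_{\rm f}$); $\mathcal{R}_{\rm ARZ}[u_\ell,u_r]$ the self-similar Lax solution of the ARZ Riemann problem ($u_\ell,u_r\in\Omega_{\rm c}$). (R1) If both states lie in $\Omega_{\rm f}$ (resp. $\Omega_{\rm c}$), $\mathcal{R}=\mathcal{R}_{\rm LWR}$ (resp. $\mathcal{R}_{\rm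 ARZ}$). (R2) If $u_\ell\in\Omega_{\rm f}$, $u_r\in\Omega_{\rm c}$: $\mathcal{R}[u_\ell,u_r](x)=u_\ell$ for $x<\sigma(u_\ell,u_m)$, $=\mathcal{R}_{\rm ARZ}[u_m,u_r](x)$ for $x>\sigma(u_\ell,u_m)$, with $u_m=(p^{-1}(\max\{W_{\rm c},w_2(u_\ell)\}-v_r),v_r)$. (R3) If $u_\ell\in\Omega_{\rm c}$, $u_r\in\Omega_{\rm f}$: $\mathcal{R}[u_\ell,u_r](x)=\mathcal{R}_{\rm ARZ}[u_\ell,u_m'](x)$ for $x<\sigma(u_m',u_m'')$, $=\mathcal{R}_{\rm LWR}[u_m'',u_r](x)$ for $x>\sigma(u_m',u_m'')$, with $u_m'=(p^{-1}(w_2(u_\ell)-V_{\rm c}),V_{\rm c})$, $u_m''=(\rho_{\rm f}(w_2(u_\ell)),v_{\rm f}(\rho_{\rm f}(w_2(u_\ell))))$. Grid and approximate solver. $\varepsilon^n_v\doteq2^{-n}V_{\rm c}$, $\varepsilon^n_w\doteq2^{-n}(W_{\rm c}-W_{\min})$, $W^n\doteq\{W_{\min}+i\varepsilon^n_w:i=0,\dots,\lfloor(W_{\max}-W_{\min})/\varepsilon^n_w\rfloor\}$, $V^n\doteq\{i\varepsilon^n_v:i=0,\dots,2^n\}\cup\{V_{\rm f}\}$, $\Omega^n\doteq\{u\in\Omega:w_1(u)\in V^n,w_2(u)\in W^n\}$. $\mathcal{R}^n\colon\Omega^n\times\Omega^n\to L^1_{\rm loc}(\mathbb{R};\Omega^n)$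 is obtained from $\mathcal{R}$ by replacing every rarefaction fan by a discretized one: a rarefaction in $\Omega_{\rm f}$ from $u_\ell$ to $u_r$ with $w_2(u_r)=w_2(u_\ell)-j\varepsilon^n_w$ is replaced by jumps between consecutive states $u_0=u_\ell,u_1,\dots,u_j=u_r\in\Omega_{\rm f}\cap\Omega^n$ with $w_2(u_i)=w_2(u_\ell)-i\varepsilon^n_w$, the jump from $u_{i-1}$ to $u_i$ travelling with speed $\sigma(u_{i-1},u_i)$; a rarefaction in $\Omega_{\rm c}$ from $u_\ell$ to $u_r$ with $w_1(u_r)=w_1(u_\ell)+j\varepsilon^n_v$, $w_2(u_r)=w_2(u_\ell)$ is replaced likewise by jumps between $u_i\in\Omega_{\rm c}\cap\Omega^n$ with $w_1(u_i)=w_1(u_\ell)+i\varepsilon^n_v$, $w_2(u_i)=w_2(u_\ell)$; all other waves are kept. Wave-front tracking. Given piecewise constant $\bar u^n$ with values in $\Omega^n$, $u^n$ is built by solving with $\mathcal{R}^n$ the Riemann problem at each jump of $\bar u^n$ at $t=0$, letting each jump between $u_-,u_+$ travel along a straight line with speed $\sigma(u_-,u_+)$, and at each time two or more fronts meet solving with $\mathcal{R}^n$ the Riemann problem given by the states at the interaction point; $u^n$ is taken left continuous in time. *)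

theory Defs
  imports Complex_Main
begin

record prm =
  vf  :: "real \<Rightarrow> real"
  pr  :: "real \<Rightarrow> real"
  Rf1 :: real
  Rf2 :: real
  Vc  :: real

type_synonym state = "real \<times> real"   (* (rho, v) *)

definition Vmax :: "prm \<Rightarrow> real" where "Vmax P = vf P 0"
definition VF :: "prm \<Rightarrow> real" where "VF P = vf P (Rf2 P)"
definition Wmax :: "prm \<Rightarrow> real" where "Wmax P = pr P (Rf2 P) + VF P"
definition Wc :: "prm \<Rightarrow> real" where "Wc P = pr P (Rf1 P) + vf P (Rf1 P)"
definition Wmin :: "prm \<Rightarrow> real" where "Wmin P = Wc P + vf P (Rf1 P) - Vmax P"

definition pinv :: "prm \<Rightarrow> real \<Rightarrow> real" where
  "pinv P w = (THE r. Rf1 P \<le> r \<and> pr P r = w)"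

definition Rmax :: "prm \<Rightarrow> real" where "Rmax P = pinv P (Wmax P)"

definition standing :: "prm \<Rightarrow> bool" where
  "standing P \<longleftrightarrow>
     0 < Rf2 P \<and> 0 < Rf1 P \<and> Rf1 P < Rf2 P \<and>
     (\<exists>d1 d2 e1 e2.
        (\<forall>r\<in>{0..Rf2 P}. (vf P has_real_derivative d1 r) (at r within {0..Rf2 P})
                         \<and> (d1 has_real_derivative d2 r) (at r within {0..Rf2 P})) \<and>
        continuous_on {0..Rf2 P} d2 \<and>
        (\<forall>r\<in>{0..Rf2 P}. 0 \<le> vf P r \<and> d1 r \<le> 0 \<and> vf P r + r * d1 r > 0
                         \<and> 2 * d1 r + r * d2 r \<le> 0) \<and>
        (\<forall>r\<in>{Rf1 P..}. (pr P has_real_derivative e1 r) (at r within {Rf1 P..})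
                         \<and> (e1 has_real_derivative e2 r) (at r within {Rf1 P..})) \<and>
        continuous_on {Rf1 P..} e2 \<and>
        (\<forall>r\<in>{Rf1 P..}. e1 r > 0 \<and> 2 * e1 r + r * e2 r > 0) \<and>
        (\<forall>r\<in>{Rf1 P..Rf2 P}. vf P r < r * e1 r)) \<and>
     vf P (Rf2 P) > 0 \<and>
     strict_mono_on {Rf1 P..Rf2 P} (\<lambda>r. vf P r + pr P r) \<and>
     (\<exists>r\<ge>Rf1 P. pr P r = Wmax P) \<and>
     0 < Vc P \<and> Vc P < VF P"

definition Omega_f :: "prm \<Rightarrow> state set" where
  "Omega_f P = {(r, v). 0 \<le> r \<and> r \<le> Rf2 P \<and> VF P \<le> v \<and> v \<le> Vmax P \<and> v = vf P r}"

text \<open>p is only defined on [R_f', +infinity[, so states of Omega_c have rho >= R_f'.\<close>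
definition Omega_c :: "prm \<Rightarrow> state set" where
  "Omega_c P = {(r, v). Rf1 P \<le> r \<and> 0 \<le> r \<and> r \<le> Rmax P \<and> 0 \<le> v \<and> v \<le> Vc P
                       \<and> Wc P \<le> v + pr P r \<and> v + pr P r \<le> Wmax P}"

definition Omega_f1 :: "prm \<Rightarrow> state set" where
  "Omega_f1 P = {u \<in> Omega_f P. fst u < Rf1 P}"

definition Omega_f2 :: "prm \<Rightarrow> state set" where
  "Omega_f2 P = {u \<in> Omega_f P. Rf1 P \<le> fst u \<and> fst u \<le> Rf2 P}"

definition Omega :: "prm \<Rightarrow> state set" where
  "Omega P = Omega_f P \<union> Omega_c P"

definition rho_f :: "prm \<Rightarrow> real \<Rightarrow> real" where
  "rho_f P w = (THE r. Rf1 P \<le> r \<and> r \<le> Rf2 P \<and> vf P r + pr P r = w)"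

definition w1 :: "prm \<Rightarrow> state \<Rightarrow> real" where
  "w1 P u = (if u \<in> Omega_c P then snd u else VF P)"

definition w2 :: "prm \<Rightarrow> state \<Rightarrow> real" where
  "w2 P u = (if u \<in> Omega_f1 P then Wc P + vf P (Rf1 P) - vf P (fst u)
             else snd u + pr P (fst u))"

definition sigma :: "state \<Rightarrow> state \<Rightarrow> real" where
  "sigma um up = (fst up * snd up - fst um * snd um) / (fst up - fst um)"

definition G1 :: "prm \<Rightarrow> (state \<times> state) set" where
  "G1 P = {(um, up). um \<in> Omega_f1 P \<and> up \<in> Omega_c P \<and> (w2 P up - Wc P) * fst um = 0}"
definition G2 :: "prm \<Rightarrow> (state \<times> state) set" where
  "G2 P = {(um, up). um \<in> Omega_f2 P \<and> up \<in> Omega_c P \<and> w2 P um = w2 P up}"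
definition G3 :: "prm \<Rightarrow> (state \<times> state) set" where
  "G3 P = {(um, up). um \<in> Omega_c P \<and> up \<in> Omega_f2 P \<and> w2 P um = w2 P up \<and> snd um = Vc P}"
definition Ge :: "prm \<Rightarrow> (state \<times> state) set" where
  "Ge P = G1 P \<union> G2 P \<union> G3 P"

definition cross :: "prm \<Rightarrow> state \<Rightarrow> state \<Rightarrow> bool" where
  "cross P a b \<longleftrightarrow> (a \<in> Omega_f P \<and> b \<in> Omega_c P) \<or> (a \<in> Omega_c P \<and> b \<in> Omega_f P)"

definition eps_v :: "prm \<Rightarrow> nat \<Rightarrow> real" where "eps_v P n = Vc P / 2 ^ n"
definition eps_w :: "prm \<Rightarrow> nat \<Rightarrow> real" where "eps_w P n = (Wc P - Wmin P) / 2 ^ n"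

definition Wgrid :: "prm \<Rightarrow> nat \<Rightarrow> real set" where
  "Wgrid P n = {Wmin P + real i * eps_w P n | i.
                  i \<le> nat \<lfloor>(Wmax P - Wmin P) / eps_w P n\<rfloor>}"

definition Vgrid :: "prm \<Rightarrow> nat \<Rightarrow> real set" where
  "Vgrid P n = {real i * eps_v P n | i. i \<le> 2 ^ n} \<union> {VF P}"

definition Omega_n :: "prm \<Rightarrow> nat \<Rightarrow> state set" where
  "Omega_n P n = {u \<in> Omega P. w1 P u \<in> Vgrid P n \<and> w2 P u \<in> Wgrid P n}"

text \<open>A Riemann fan of R^n is encoded by the list of the successive constant states
  [u_0 = u_l, u_1, ..., u_m = u_r]; the jump from u_(i-1) to u_i travels with speed
  sigma u_(i-1) u_i.\<close>

text \<open>LWR (concave flux): rho_l < rho_r shock; rho_l > rho_r (discretized) rarefaction;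
  when no grid level lies strictly between (flux linear there) the Lax solution is a
  single contact jump, which is kept.\<close>
definition lwr_fan :: "prm \<Rightarrow> nat \<Rightarrow> state \<Rightarrow> state \<Rightarrow> state list \<Rightarrow> bool" where
  "lwr_fan P n ul ur L \<longleftrightarrow>
     (fst ul = fst ur \<and> L = [ul]) \<or>
     (fst ul < fst ur \<and> L = [ul, ur]) \<or>
     (fst ul > fst ur \<and>
        (let j = nat \<lfloor>(w2 P ul - w2 P ur) / eps_w P n\<rfloor> in
          (j = 0 \<and> L = [ul, ur]) \<or>
          (0 < j \<and> length L = Suc j \<and> L ! 0 = ul \<and> L ! j = ur \<and>
           (\<forall>i. 0 < i \<and> i < j \<longrightarrow>
               L ! i \<in> Omega_f P \<inter> Omega_n P n \<and> w2 P (L ! i) = w2 P ul - real i * eps_w P n))))"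

definition arz_mid :: "prm \<Rightarrow> state \<Rightarrow> state \<Rightarrow> state" where
  "arz_mid P ul ur = (pinv P (w2 P ul - snd ur), snd ur)"

text \<open>1-wave from ul to um (same w2): shock if v decreases, discretized rarefaction if v increases.\<close>
definition arz_1wave :: "prm \<Rightarrow> nat \<Rightarrow> state \<Rightarrow> state \<Rightarrow> state list" where
  "arz_1wave P n ul um =
     (if snd um < snd ul then [ul, um]
      else if snd um = snd ul then [ul]
      else map (\<lambda>i. (pinv P (w2 P ul - (snd ul + real i * eps_v P n)), snd ul + real i * eps_v P n))
               [0..<Suc (nat \<lfloor>(snd um - snd ul) / eps_v P n\<rfloor>)])"

text \<open>ARZ Lax solution: 1-wave ul -> um, then 2-contact um -> ur.\<close>
definition arz_fan :: "prm \<Rightarrow> nat \<Rightarrow> state \<Rightarrow> state \<Rightarrow> state list" where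
  "arz_fan P n ul ur =
     (let um = arz_mid P ul ur in arz_1wave P n ul um @ (if um = ur then [] else [ur]))"

definition Rn_sol :: "prm \<Rightarrow> nat \<Rightarrow> state \<Rightarrow> state \<Rightarrow> state list \<Rightarrow> bool" where
  "Rn_sol P n ul ur L \<longleftrightarrow>
     (ul \<in> Omega_f P \<and> ur \<in> Omega_f P \<and> lwr_fan P n ul ur L) \<or>
     (ul \<in> Omega_c P \<and> ur \<in> Omega_c P \<and> L = arz_fan P n ul ur) \<or>
     (ul \<in> Omega_f P \<and> ur \<in> Omega_c P \<and>
        L = ul # arz_fan P n (pinv P (max (Wc P) (w2 P ul) - snd ur), snd ur) ur) \<or>
     (ul \<in> Omega_c P \<and> ur \<in> Omega_f P \<and>
        (\<exists>L2. lwr_fan P n (rho_f P (w2 P ul), vf P (rho_f P (w2 P ul))) ur L2 \<and>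
              L = arz_fan P n ul (pinv P (w2 P ul - Vc P), Vc P) @ L2))"

text \<open>A front: (position at the reference time, left state, right state).\<close>
type_synonym front = "real \<times> state \<times> state"

definition fspeed :: "front \<Rightarrow> real" where
  "fspeed f = sigma (fst (snd f)) (snd (snd f))"

definition fpos :: "real \<Rightarrow> front \<Rightarrow> real \<Rightarrow> real" where
  "fpos t0 f t = fst f + fspeed f * (t - t0)"

definition isPT :: "prm \<Rightarrow> front \<Rightarrow> bool" where
  "isPT P f \<longleftrightarrow> cross P (fst (snd f)) (snd (snd f))"

definition fan_fronts :: "real \<Rightarrow> state list \<Rightarrow> front list" where
  "fan_fronts x L = map (\<lambda>i. (x, L ! i, L ! Suc i)) [0..<length L - 1]"

fun grp :: "('a \<Rightarrow> real) \<Rightarrow> 'a list \<Rightarrow> 'a list list" where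
  "grp X [] = []"
| "grp X (f # fs) =
     (case grp X fs of
        [] \<Rightarrow> [[f]]
      | g # gs \<Rightarrow> (if g \<noteq> [] \<and> X (hd g) = X f then (f # g) # gs else [f] # g # gs))"

text \<open>A group of coinciding fronts is an interaction iff not all of them travelled together
  (i.e. not all have the same speed).\<close>
definition interacting :: "front list \<Rightarrow> bool" where
  "interacting g \<longleftrightarrow> (\<exists>f\<in>set g. fspeed f \<noteq> fspeed (hd g))"

text \<open>Between t0 and t1 no two fronts meet (fronts travelling together forever are allowed).\<close>
definition no_cross :: "real \<Rightarrow> real \<Rightarrow> front list \<Rightarrow> bool" where
  "no_cross t0 t1 fs \<longleftrightarrow>
     (\<forall>i. Suc i < length fs \<longrightarrow>
        (\<forall>t. t0 < t \<and> t < t1 \<longrightarrow> fpos t0 (fs ! i) t < fpos t0 (fs ! Suc i) t) \<or>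
        (fst (fs ! i) = fst (fs ! Suc i) \<and> fspeed (fs ! i) = fspeed (fs ! Suc i)))"

text \<open>At time t1 every interaction is resolved by R^n with the outer states.\<close>
definition step_ok :: "prm \<Rightarrow> nat \<Rightarrow> real \<Rightarrow> real \<Rightarrow> front list \<Rightarrow> front list \<Rightarrow> bool" where
  "step_ok P n t0 t1 fs fs' \<longleftrightarrow>
     (let X = (\<lambda>f. fpos t0 f t1); gs = grp X fs in
      \<exists>Ls. length Ls = length gs \<and>
        (\<forall>i<length gs. interacting (gs ! i) \<longrightarrow>
            Rn_sol P n (fst (snd (hd (gs ! i)))) (snd (snd (last (gs ! i)))) (Ls ! i)) \<and>
        fs' = concat (map (\<lambda>i. if interacting (gs ! i)
                               then fan_fronts (X (hd (gs ! i))) (Ls ! i)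
                               else map (\<lambda>f. (X f, snd f)) (gs ! i)) [0..<length gs]))"

text \<open>Wave-front tracking approximation from initial datum with jump points ys and values vs:
  tau k are the (refined) interaction times, C k the fronts present on ]tau k, tau (k+1)]
  (left continuity in time), given by their positions at time tau k.\<close>
definition wft :: "prm \<Rightarrow> nat \<Rightarrow> real list \<Rightarrow> state list \<Rightarrow> (nat \<Rightarrow> real) \<Rightarrow> (nat \<Rightarrow> front list) \<Rightarrow> bool" where
  "wft P n ys vs tau C \<longleftrightarrow>
     tau 0 = 0 \<and> strict_mono tau \<and> filterlim tau at_top sequentially \<and>
     (\<exists>Ls. length Ls = length ys \<and>
        (\<forall>i<length ys. Rn_sol P n (vs ! i) (vs ! Suc i) (Ls ! i)) \<and>
        C 0 = concat (map (\<lambda>i. fan_fronts (ys ! i) (Ls ! i)) [0..<length ys])) \<and>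
     (\<forall>k. no_cross (tau k) (tau (Suc k)) (C k) \<and>
          step_ok P n (tau k) (tau (Suc k)) (C k) (C (Suc k)))"

definition fronts_at :: "(nat \<Rightarrow> real) \<Rightarrow> (nat \<Rightarrow> front list) \<Rightarrow> real \<Rightarrow> front list" where
  "fronts_at tau C t = C (LEAST k. t \<le> tau (Suc k))"

definition pc_jump :: "(real \<Rightarrow> state) \<Rightarrow> real \<Rightarrow> state \<Rightarrow> state \<Rightarrow> bool" where
  "pc_jump f x a b \<longleftrightarrow>
     (\<exists>d>0. \<forall>y. x - d < y \<and> y < x \<longrightarrow> f y = a) \<and>
     (\<exists>d>0. \<forall>y. x < y \<and> y < x + d \<longrightarrow> f y = b)"

definition NPT :: "prm \<Rightarrow> (real \<Rightarrow> state) \<Rightarrow> (nat \<Rightarrow> real) \<Rightarrow> (nat \<Rightarrow> front list) \<Rightarrow> real \<Rightarrow> nat" where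
  "NPT P ubar tau C t =
     (if t = 0 then card {x. \<exists>a b. pc_jump ubar x a b \<and> cross P a b}
      else length (filter (isPT P) (fronts_at tau C t)))"

definition PT_interact :: "prm \<Rightarrow> (nat \<Rightarrow> real) \<Rightarrow> (nat \<Rightarrow> front list) \<Rightarrow> real \<Rightarrow> bool" where
  "PT_interact P tau C t \<longleftrightarrow>
     (\<exists>k. tau (Suc k) = t \<and>
        (\<exists>g\<in>set (grp (\<lambda>f. fpos (tau k) f t) (C k)).
            interacting g \<and> 2 \<le> length (filter (isPT P) g)))"

end

theory Submission
  imports Defs
begin

lemma standingD:
  assumes "standing P"
  shows "0 < Rf1 P" "Rf1 P < Rf2 P" "VF P > 0" "0 < Vc P" "Vc P < VF P"
    "strict_mono_on {Rf1 P..Rf2 P} (\<lambda>r. vf P r + pr P r)"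
    "\<exists>r\<ge>Rf1 P. pr P r = Wmax P"
  using assms unfolding standing_def VF_def by auto

lemma p_props:
  assumes "standing P"
  shows "continuous_on {Rf1 P..} (pr P)" "strict_mono_on {Rf1 P..} (pr P)"
proof -
  from assms obtain e1 e2 where
    D: "\<forall>r\<in>{Rf1 P..}. (pr P has_real_derivative e1 r) (at r within {Rf1 P..})"
    and pos: "\<forall>r\<in>{Rf1 P..}. e1 r > 0"
    unfolding standing_def by blast
  show c: "continuous_on {Rf1 P..} (pr P)"
    unfolding continuous_on_eq_continuous_within using D DERIV_continuous by blast
  show "strict_mono_on {Rf1 P..} (pr P)"
  proof (rule strict_mono_onI)
    fix x y assume xy: "x \<in> {Rf1 P..}" "y \<in> {Rf1 P..}" "x < y"
    show "pr P x < pr P y"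
    proof (rule DERIV_pos_imp_increasing_open[OF \<open>x<y\<close>])
      fix z assume z: "x < z" "z < y"
      have "at z within {Rf1 P..} = at z"
        by (rule at_within_open_subset[of z "{Rf1 P<..}"]) (use z xy in auto)
      then show "\<exists>l. DERIV (pr P) z :> l \<and> l > 0"
        using D pos z xy by (metis atLeast_iff less_imp_le order_trans)
    next
      show "continuous_on {x..y} (pr P)"
        by (rule continuous_on_subset[OF c]) (use xy in auto)
    qed
  qed
qed

lemma vf_props:
  assumes "standing P"
  shows "continuous_on {0..Rf2 P} (vf P)"
    and "\<And>x y. 0 \<le> x \<Longrightarrow> x \<le> y \<Longrightarrow> y \<le> Rf2 P \<Longrightarrow> vf P y \<le> vf P x"
proof -
  from assms obtain d1 where
    D: "\<forall>r\<in>{0..Rf2 P}. (vf P has_real_derivative d1 r) (at r within {0..Rf2 P})"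
    and neg: "\<forall>r\<in>{0..Rf2 P}. d1 r \<le> 0"
    unfolding standing_def by blast
  show c: "continuous_on {0..Rf2 P} (vf P)"
    unfolding continuous_on_eq_continuous_within using D DERIV_continuous by blast
  fix x y assume xy: "0 \<le> x" "x \<le> y" "y \<le> Rf2 P"
  show "vf P y \<le> vf P x"
  proof (rule DERIV_nonpos_imp_decreasing_open[OF \<open>x\<le>y\<close>])
    fix z assume z: "x < z" "z < y"
    have "at z within {0..Rf2 P} = at z"
      by (rule at_within_Icc_at) (use z xy in auto)
    then show "\<exists>l. DERIV (vf P) z :> l \<and> l \<le> 0"
      using D neg z xy by (metis atLeastAtMost_iff less_imp_le order_trans)
  next
    show "continuous_on {x..y} (vf P)"
      by (rule continuous_on_subset[OF c]) (use xy in auto)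
  qed
qed

lemma p_inj: "standing P \<Longrightarrow> Rf1 P \<le> x \<Longrightarrow> Rf1 P \<le> y \<Longrightarrow> pr P x = pr P y \<Longrightarrow> x = y"
  using p_props(2)[of P] by (metis atLeast_iff linorder_neq_iff order_less_irrefl strict_mono_onD)

lemma p_less: "standing P \<Longrightarrow> Rf1 P \<le> x \<Longrightarrow> x < y \<Longrightarrow> pr P x < pr P y"
  using p_props(2)[of P] by (simp add: strict_mono_onD)

lemma Wmax_ge: "standing P \<Longrightarrow> pr P (Rf1 P) \<le> Wmax P"
  using standingD(7)[of P] p_props(2)[of P]
  by (metis atLeast_iff order.refl order_le_less strict_mono_onD)

lemma pinv_props:
  assumes S: "standing P" and w: "pr P (Rf1 P) \<le> w" "w \<le> Wmax P"
  shows "Rf1 P \<le> pinv P w \<and> pr P (pinv P w) = w"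
proof -
  obtain rs where rs: "rs \<ge> Rf1 P" "pr P rs = Wmax P" using standingD(7)[OF S] by blast
  have "continuous_on {Rf1 P..rs} (pr P)"
    by (rule continuous_on_subset[OF p_props(1)[OF S]]) auto
  then obtain r where r: "Rf1 P \<le> r" "pr P r = w"
    using IVT'[of "pr P" "Rf1 P" w rs] w rs by auto
  show ?thesis unfolding pinv_def
    by (rule theI[of _ r]) (use r p_inj[OF S] in auto)
qed

lemma pinv_p: "standing P \<Longrightarrow> Rf1 P \<le> r \<Longrightarrow> pinv P (pr P r) = r"
  unfolding pinv_def by (rule the_equality) (auto dest: p_inj)

lemma pinv_le_Rmax:
  assumes S: "standing P" and w: "pr P (Rf1 P) \<le> w" "w \<le> Wmax P"
  shows "pinv P w \<le> Rmax P"
proof (rule ccontr)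
  assume "\<not> ?thesis"
  then have "Rmax P < pinv P w" by simp
  moreover have "Rf1 P \<le> Rmax P" "pr P (Rmax P) = Wmax P"
    using pinv_props[OF S Wmax_ge[OF S] order.refl] unfolding Rmax_def by auto
  ultimately have "Wmax P < pr P (pinv P w)" using p_less[OF S] by metis
  then show False using pinv_props[OF S w] w by simp
qed

lemma Wc_lt_Wmax: "standing P \<Longrightarrow> Wc P < Wmax P"
  using standingD(2,6)[of P] unfolding Wc_def Wmax_def VF_def
  by (smt (verit) atLeastAtMost_iff standingD(1) strict_mono_onD)

lemma rho_f_props:
  assumes S: "standing P" and w: "Wc P \<le> w" "w \<le> Wmax P"
  shows "Rf1 P \<le> rho_f P w \<and> rho_f P w \<le> Rf2 P \<and> vf P (rho_f P w) + pr P (rho_f P w) = w"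
proof -
  have c: "continuous_on {Rf1 P..Rf2 P} (\<lambda>r. vf P r + pr P r)"
    apply (rule continuous_on_add)
     apply (rule continuous_on_subset[OF vf_props(1)[OF S]]) using standingD(1)[OF S] apply auto[1]
    apply (rule continuous_on_subset[OF p_props(1)[OF S]]) by auto
  obtain r where r: "Rf1 P \<le> r" "r \<le> Rf2 P" "vf P r + pr P r = w"
    using IVT'[of "\<lambda>r. vf P r + pr P r" "Rf1 P" w "Rf2 P", OF _ _ _ c] w standingD(2)[OF S]
    unfolding Wc_def Wmax_def VF_def by auto
  have inj: "inj_on (\<lambda>r. vf P r + pr P r) {Rf1 P..Rf2 P}"
    using standingD(6)[OF S] strict_mono_on_imp_inj_on by blast
  show ?thesis unfolding rho_f_def
    by (rule theI[of _ r]) (use r inj in \<open>auto simp: inj_on_def\<close>)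
qed

definition mkc :: "prm \<Rightarrow> real \<Rightarrow> real \<Rightarrow> state" where "mkc P w v = (pinv P (w - v), v)"
definition gridv :: "prm \<Rightarrow> nat \<Rightarrow> real \<Rightarrow> bool" where
  "gridv P n v \<longleftrightarrow> (\<exists>i. i \<le> 2 ^ n \<and> v = real i * eps_v P n)"
definition Good :: "prm \<Rightarrow> nat \<Rightarrow> state \<Rightarrow> bool" where
  "Good P n u \<longleftrightarrow> u \<in> Omega_f P \<or> (u \<in> Omega_c P \<and> gridv P n (snd u))"

lemma vf_Rf1: "standing P \<Longrightarrow> VF P \<le> vf P (Rf1 P)"
  unfolding VF_def using vf_props(2)[of P "Rf1 P" "Rf2 P"] standingD(1,2)[of P] by auto

lemma f_not_c: "standing P \<Longrightarrow> u \<in> Omega_f P \<Longrightarrow> u \<notin> Omega_c P"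
  unfolding Omega_f_def Omega_c_def using standingD(5)[of P] by auto

lemma c_w2:
  assumes "standing P" "u \<in> Omega_c P"
  shows "w2 P u = snd u + pr P (fst u) \<and> Wc P \<le> w2 P u \<and> w2 P u \<le> Wmax P"
proof -
  have "u \<notin> Omega_f1 P" using f_not_c[OF assms(1)] assms(2) unfolding Omega_f1_def by blast
  then show ?thesis using assms(2) unfolding w2_def Omega_c_def by auto
qed

lemma mkc_c:
  assumes S: "standing P" and w: "Wc P \<le> w" "w \<le> Wmax P" and v: "0 \<le> v" "v \<le> Vc P"
  shows "mkc P w v \<in> Omega_c P \<and> w2 P (mkc P w v) = w"
proof -
  have "pr P (Rf1 P) \<le> w - v"
    using w v vf_Rf1[OF S] standingD(5)[OF S] unfolding Wc_def by linarith
  moreover have "w - v \<le> Wmax P" using w v by simp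
  ultimately have r: "Rf1 P \<le> pinv P (w - v)" "pr P (pinv P (w - v)) = w - v"
     "pinv P (w - v) \<le> Rmax P"
    using pinv_props[OF S] pinv_le_Rmax[OF S] by auto
  have "mkc P w v \<in> Omega_c P"
    unfolding mkc_def Omega_c_def using r w v standingD(1)[OF S] by auto
  then show ?thesis using c_w2[OF S] r unfolding mkc_def by auto
qed

lemma c_mkc: "standing P \<Longrightarrow> u \<in> Omega_c P \<Longrightarrow> mkc P (w2 P u) (snd u) = u"
  using c_w2[of P u] pinv_p[of P "fst u"] unfolding mkc_def Omega_c_def
  by (cases u) auto

lemma f_w2:
  assumes S: "standing P" and u: "u \<in> Omega_f P"
  shows "Wc P \<le> max (Wc P) (w2 P u) \<and> max (Wc P) (w2 P u) \<le> Wmax P"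
    and "u \<in> Omega_f1 P \<Longrightarrow> w2 P u \<le> Wc P"
    and "u \<in> Omega_f2 P \<Longrightarrow> u \<notin> Omega_f1 P \<and> w2 P u = snd u + pr P (fst u) \<and> Wc P \<le> w2 P u"
proof -
  have A: "u \<in> Omega_f1 P \<Longrightarrow> w2 P u \<le> Wc P"
    using u vf_props(2)[OF S, of "fst u" "Rf1 P"] standingD(2)[OF S]
    unfolding Omega_f1_def Omega_f_def w2_def by auto
  have B: "u \<in> Omega_f2 P \<Longrightarrow> u \<notin> Omega_f1 P \<and> w2 P u = snd u + pr P (fst u) \<and> Wc P \<le> w2 P u \<and> w2 P u \<le> Wmax P"
  proof -
    assume u2: "u \<in> Omega_f2 P"
    then have nf1: "u \<notin> Omega_f1 P" unfolding Omega_f1_def Omega_f2_def by auto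
    have m: "strict_mono_on {Rf1 P..Rf2 P} (\<lambda>r. vf P r + pr P r)" using standingD(6)[OF S] .
    have r: "Rf1 P \<le> fst u" "fst u \<le> Rf2 P" "snd u = vf P (fst u)"
      using u2 unfolding Omega_f2_def Omega_f_def by auto
    have "Wc P \<le> vf P (fst u) + pr P (fst u)"
      unfolding Wc_def using r m standingD(2)[OF S]
      by (smt (verit) atLeastAtMost_iff strict_mono_onD)
    moreover have "vf P (fst u) + pr P (fst u) \<le> Wmax P"
      unfolding Wmax_def VF_def using r m standingD(2)[OF S]
      by (smt (verit) atLeastAtMost_iff strict_mono_onD)
    ultimately show ?thesis using nf1 r unfolding w2_def by auto
  qed
  have "u \<in> Omega_f1 P \<or> u \<in> Omega_f2 P" using u unfolding Omega_f1_def Omega_f2_def Omega_f_def by auto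
  then show "Wc P \<le> max (Wc P) (w2 P u) \<and> max (Wc P) (w2 P u) \<le> Wmax P"
    using A B Wc_lt_Wmax[OF S] by auto
  show "u \<in> Omega_f1 P \<Longrightarrow> w2 P u \<le> Wc P" by (rule A)
  show "u \<in> Omega_f2 P \<Longrightarrow> u \<notin> Omega_f1 P \<and> w2 P u = snd u + pr P (fst u) \<and> Wc P \<le> w2 P u"
    using B by auto
qed

lemma eps_v_pos: "standing P \<Longrightarrow> eps_v P n > 0"
  unfolding eps_v_def using standingD(4)[of P] by auto

lemma gridv_range: "standing P \<Longrightarrow> gridv P n v \<Longrightarrow> 0 \<le> v \<and> v \<le> Vc P"
proof -
  assume S: "standing P" and g: "gridv P n v"
  then obtain i where i: "i \<le> 2^n" "v = real i * eps_v P n" unfolding gridv_def by auto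
  have "real i * (Vc P / 2^n) \<le> 2^n * (Vc P / 2^n)"
    by (rule mult_right_mono) (use i standingD(4)[OF S] in \<open>auto simp: of_nat_le_iff[symmetric]\<close>)
  then show ?thesis using i standingD(4)[OF S] unfolding eps_v_def by auto
qed

definition goodc :: "prm \<Rightarrow> nat \<Rightarrow> state \<Rightarrow> bool" where
  "goodc P n u \<longleftrightarrow> u \<in> Omega_c P \<and> gridv P n (snd u)"

lemma arz1:
  assumes S: "standing P" and a: "goodc P n a" and v: "gridv P n v"
  defines "um \<equiv> mkc P (w2 P a) v"
  shows "arz_1wave P n a um \<noteq> [] \<and> hd (arz_1wave P n a um) = a \<and> last (arz_1wave P n a um) = um
         \<and> (\<forall>x\<in>set (arz_1wave P n a um). goodc P n x)"
proof -
  have ac: "a \<in> Omega_c P" and ga: "gridv P n (snd a)" using a unfolding goodc_def by auto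
  have w: "Wc P \<le> w2 P a" "w2 P a \<le> Wmax P" using c_w2[OF S ac] by auto
  have snum: "snd um = v" unfolding um_def mkc_def by simp
  have vr: "0 \<le> v" "v \<le> Vc P" using gridv_range[OF S v] by auto
  have umc: "goodc P n um" using mkc_c[OF S w vr] v snum unfolding um_def goodc_def by auto
  have ea: "mkc P (w2 P a) (snd a) = a" by (rule c_mkc[OF S ac])
  consider "v < snd a" | "v = snd a" | "snd a < v" by linarith
  then show ?thesis
  proof cases
    case 1 then show ?thesis using a umc unfolding arz_1wave_def snum by auto
  next
    case 2 then have "um = a" using ea unfolding um_def by simp
    then show ?thesis using a 2 unfolding arz_1wave_def snum by auto
  next
    case 3
    obtain ia where ia: "ia \<le> 2^n" "snd a = real ia * eps_v P n" using ga unfolding gridv_def by auto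
    obtain ib where ib: "ib \<le> 2^n" "v = real ib * eps_v P n" using v unfolding gridv_def by auto
    have ep: "eps_v P n > 0" by (rule eps_v_pos[OF S])
    have iab: "ia < ib" using 3 ia ib ep by (simp add: mult_less_cancel_right)
    have q: "(v - snd a) / eps_v P n = real (ib - ia)"
      using ia ib ep iab by (simp add: of_nat_diff field_simps)
    define m where "m = ib - ia"
    have L: "arz_1wave P n a um = map (\<lambda>i. mkc P (w2 P a) (snd a + real i * eps_v P n)) [0..<Suc m]"
      using 3 unfolding arz_1wave_def snum q m_def by (simp add: mkc_def)
    have gi: "goodc P n (mkc P (w2 P a) (snd a + real i * eps_v P n))" if "i \<le> m" for i
    proof -
      have e: "snd a + real i * eps_v P n = real (ia + i) * eps_v P n"
        using ia by (simp add: algebra_simps)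
      have g: "gridv P n (snd a + real i * eps_v P n)"
        unfolding gridv_def e using that ib iab m_def by (intro exI[of _ "ia + i"]) auto
      show ?thesis using mkc_c[OF S w gridv_range[OF S g, THEN conjunct1] gridv_range[OF S g, THEN conjunct2]] g
        unfolding goodc_def mkc_def by auto
    qed
    have last: "snd a + real m * eps_v P n = v"
      using ia ib iab unfolding m_def by (simp add: of_nat_diff algebra_simps)
    have h: "hd [0..<Suc m] = 0" by (simp add: hd_upt del: upt_Suc)
    have l: "last [0..<Suc m] = m" by simp
    show ?thesis unfolding L using gi ea last h l
      by (auto simp: um_def hd_map last_map simp del: upt_Suc)
  qed
qed

lemma arzfan:
  assumes S: "standing P" and a: "goodc P n a" and b: "goodc P n b"
  shows "arz_fan P n a b \<noteq> [] \<and> hd (arz_fan P n a b) = a \<and> last (arz_fan P n a b) = b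
         \<and> (\<forall>x\<in>set (arz_fan P n a b). goodc P n x)"
proof -
  have gb: "gridv P n (snd b)" using b unfolding goodc_def by auto
  have e: "arz_mid P a b = mkc P (w2 P a) (snd b)" unfolding arz_mid_def mkc_def by simp
  show ?thesis using arz1[OF S a gb] b unfolding arz_fan_def Let_def e by auto
qed

lemma lwrfan:
  assumes a: "a \<in> Omega_f P" and b: "b \<in> Omega_f P" and L: "lwr_fan P n a b L"
  shows "L \<noteq> [] \<and> hd L = a \<and> last L = b \<and> (\<forall>x\<in>set L. x \<in> Omega_f P)"
proof -
  have eq: "fst a = fst b \<Longrightarrow> a = b" using a b unfolding Omega_f_def by (cases a, cases b) auto
  from L consider "fst a = fst b \<and> L = [a]" | "L = [a, b]"
    | j where "0 < j" "length L = Suc j" "L ! 0 = a" "L ! j = b"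
       "\<forall>i. 0 < i \<and> i < j \<longrightarrow> L ! i \<in> Omega_f P \<inter> Omega_n P n"
    unfolding lwr_fan_def Let_def by metis
  then show ?thesis
  proof cases
    case 1 then show ?thesis using eq a by auto
  next
    case 2 then show ?thesis using a b by auto
  next
    case 3
    have ne: "L \<noteq> []" using 3 by auto
    have "hd L = a" using 3 ne by (simp add: hd_conv_nth)
    moreover have "last L = b" using 3 ne by (simp add: last_conv_nth)
    moreover have "\<forall>x\<in>set L. x \<in> Omega_f P"
    proof
      fix x assume "x \<in> set L"
      then obtain i where i: "i < Suc j" "x = L ! i" using 3 by (auto simp: in_set_conv_nth)
      then consider "i = 0" | "i = j" | "0 < i \<and> i < j" by linarith
      then show "x \<in> Omega_f P" using 3 i a b by cases auto
    qed
    ultimately show ?thesis using ne by auto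
  qed
qed

fun chainfrom :: "state \<Rightarrow> front list \<Rightarrow> state \<Rightarrow> bool" where
  "chainfrom a [] b = (a = b)"
| "chainfrom a (f # fs) b = (fst (snd f) = a \<and> chainfrom (snd (snd f)) fs b)"

lemma chainfrom_append: "chainfrom a (xs @ ys) b \<longleftrightarrow> (\<exists>c. chainfrom a xs c \<and> chainfrom c ys b)"
  by (induction xs arbitrary: a) auto

lemma fan_fronts_Nil[simp]: "fan_fronts x [] = []" and fan_fronts_single[simp]: "fan_fronts x [a] = []"
  unfolding fan_fronts_def by auto

lemma fan_fronts_Cons2[simp]: "fan_fronts x (a # b # L) = (x, a, b) # fan_fronts x (b # L)"
proof -
  have "[0..<length (a # b # L) - 1] = 0 # map Suc [0..<length (b # L) - 1]"
    by (simp add: upt_conv_Cons map_Suc_upt del: upt_Suc)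
  then show ?thesis unfolding fan_fronts_def by simp
qed

lemma fan_chain: "L \<noteq> [] \<Longrightarrow> chainfrom (hd L) (fan_fronts x L) (last L)"
proof (induction L)
  case (Cons a L) then show ?case by (cases L) auto
qed simp

lemma fan_set: "f \<in> set (fan_fronts x L) \<Longrightarrow> fst (snd f) \<in> set L \<and> snd (snd f) \<in> set L"
proof (induction L rule: induct_list012)
  case (3 a b L) then show ?case by auto
qed auto

lemma fan_append: "L1 \<noteq> [] \<Longrightarrow> L2 \<noteq> [] \<Longrightarrow>
   fan_fronts x (L1 @ L2) = fan_fronts x L1 @ (x, last L1, hd L2) # fan_fronts x L2"
proof (induction L1 rule: induct_list012)
  case (2 a) then show ?case by (cases L2) auto
next
  case (3 a b L) then show ?case by auto
qed auto

definition cnt :: "prm \<Rightarrow> front list \<Rightarrow> nat" where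
  "cnt P fs = length (filter (isPT P) fs)"

lemma cross_same_f: "standing P \<Longrightarrow> a \<in> Omega_f P \<Longrightarrow> b \<in> Omega_f P \<Longrightarrow> \<not> cross P a b"
  unfolding cross_def using f_not_c by blast
lemma cross_same_c: "standing P \<Longrightarrow> a \<in> Omega_c P \<Longrightarrow> b \<in> Omega_c P \<Longrightarrow> \<not> cross P a b"
  unfolding cross_def using f_not_c by blast

definition onephase :: "prm \<Rightarrow> state list \<Rightarrow> bool" where
  "onephase P L \<longleftrightarrow> (\<forall>y\<in>set L. y \<in> Omega_f P) \<or> (\<forall>y\<in>set L. y \<in> Omega_c P)"

lemma fan_onephase: "standing P \<Longrightarrow> onephase P L \<Longrightarrow> f \<in> set (fan_fronts x L) \<Longrightarrow> \<not> isPT P f"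
  unfolding onephase_def isPT_def using fan_set[of f x L] cross_same_f cross_same_c by metis

lemma cnt_onephase: "standing P \<Longrightarrow> onephase P L \<Longrightarrow> cnt P (fan_fronts x L) = 0"
  unfolding cnt_def using fan_onephase by (simp add: filter_empty_conv)

lemma fan_two:
  assumes "standing P" "L1 \<noteq> []" "L2 \<noteq> []" "onephase P L1" "onephase P L2"
  shows "cnt P (fan_fronts x (L1 @ L2)) \<le> 1"
    and "\<And>f. f \<in> set (fan_fronts x (L1 @ L2)) \<Longrightarrow> isPT P f \<Longrightarrow> f = (x, last L1, hd L2)"
proof -
  have e: "fan_fronts x (L1 @ L2) = fan_fronts x L1 @ (x, last L1, hd L2) # fan_fronts x L2"
    by (rule fan_append) (use assms in auto)
  have "filter (isPT P) (fan_fronts x L1) = []" "filter (isPT P) (fan_fronts x L2) = []"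
    using fan_onephase[OF assms(1)] assms(4,5) by (auto simp: filter_empty_conv)
  then show "cnt P (fan_fronts x (L1 @ L2)) \<le> 1" unfolding cnt_def e by simp
  show "\<And>f. f \<in> set (fan_fronts x (L1 @ L2)) \<Longrightarrow> isPT P f \<Longrightarrow> f = (x, last L1, hd L2)"
    using fan_onephase[OF assms(1)] assms(4,5) unfolding e by auto
qed

lemma goodc_Good: "goodc P n u \<Longrightarrow> Good P n u"
  unfolding goodc_def Good_def by auto

lemma Good_cases: "Good P n u \<Longrightarrow> u \<in> Omega_f P \<or> goodc P n u"
  unfolding goodc_def Good_def by auto

definition fanok :: "prm \<Rightarrow> nat \<Rightarrow> state \<Rightarrow> front list \<Rightarrow> state \<Rightarrow> bool" where
  "fanok P n a F b \<longleftrightarrow> chainfrom a F b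
     \<and> (\<forall>f\<in>set F. Good P n (fst (snd f)) \<and> Good P n (snd (snd f)))
     \<and> (\<forall>f\<in>set F. isPT P f \<longrightarrow> (fst (snd f), snd (snd f)) \<in> Ge P)"

lemma rnsol:
  assumes S: "standing P" and a: "Good P n a" and b: "Good P n b" and R: "Rn_sol P n a b L"
  shows "fanok P n a (fan_fronts x L) b \<and> cnt P (fan_fronts x L) \<le> 1"
proof -
  have gen: "fanok P n a (fan_fronts x L) b"
    if "L \<noteq> []" "hd L = a" "last L = b" "\<forall>y\<in>set L. Good P n y"
       "\<forall>f\<in>set (fan_fronts x L). isPT P f \<longrightarrow> (fst (snd f), snd (snd f)) \<in> Ge P"
    using that fan_chain[of L x] fan_set[of _ x L] unfolding fanok_def by metis
  have gVc: "gridv P n (Vc P)" unfolding gridv_def eps_v_def by (intro exI[of _ "2^n"]) auto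
  have fnc: "\<And>u. u \<in> Omega_f P \<Longrightarrow> u \<notin> Omega_c P" using f_not_c[OF S] by blast
  from R consider
      (FF) "a \<in> Omega_f P" "b \<in> Omega_f P" "lwr_fan P n a b L"
    | (CC) "a \<in> Omega_c P" "b \<in> Omega_c P" "L = arz_fan P n a b"
    | (FC) "a \<in> Omega_f P" "b \<in> Omega_c P"
         "L = a # arz_fan P n (pinv P (max (Wc P) (w2 P a) - snd b), snd b) b"
    | (CF) L2 where "a \<in> Omega_c P" "b \<in> Omega_f P"
         "lwr_fan P n (rho_f P (w2 P a), vf P (rho_f P (w2 P a))) b L2"
         "L = arz_fan P n a (pinv P (w2 P a - Vc P), Vc P) @ L2"
    unfolding Rn_sol_def by blast
  then show ?thesis
  proof cases
    case FF
    have l: "L \<noteq> [] \<and> hd L = a \<and> last L = b \<and> (\<forall>x\<in>set L. x \<in> Omega_f P)"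
      by (rule lwrfan[OF FF])
    then have op: "onephase P L" unfolding onephase_def by auto
    show ?thesis using gen l fan_onephase[OF S op] cnt_onephase[OF S op] unfolding Good_def by auto
  next
    case CC
    have ga: "goodc P n a" "goodc P n b" using a b CC fnc Good_cases by blast+
    have l: "L \<noteq> [] \<and> hd L = a \<and> last L = b \<and> (\<forall>x\<in>set L. goodc P n x)"
      using arzfan[OF S ga] CC by simp
    then have op: "onephase P L" unfolding onephase_def goodc_def by auto
    show ?thesis using gen l fan_onephase[OF S op] cnt_onephase[OF S op] goodc_Good by auto
  next
    case FC
    define c where "c = mkc P (max (Wc P) (w2 P a)) (snd b)"
    have gb: "goodc P n b" using b FC fnc Good_cases by blast
    have w: "Wc P \<le> max (Wc P) (w2 P a)" "max (Wc P) (w2 P a) \<le> Wmax P" using f_w2(1)[OF S FC(1)] by auto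
    have vr: "0 \<le> snd b" "snd b \<le> Vc P" using gridv_range[OF S] gb unfolding goodc_def by auto
    have cc: "c \<in> Omega_c P" "w2 P c = max (Wc P) (w2 P a)" using mkc_c[OF S w vr] unfolding c_def by auto
    have gc: "goodc P n c" using cc gb unfolding goodc_def c_def mkc_def by auto
    have Lc: "L = [a] @ arz_fan P n c b" using FC unfolding c_def mkc_def by simp
    have l2: "arz_fan P n c b \<noteq> [] \<and> hd (arz_fan P n c b) = c \<and> last (arz_fan P n c b) = b \<and>
              (\<forall>x\<in>set (arz_fan P n c b). goodc P n x)" by (rule arzfan[OF S gc gb])
    have op1: "onephase P [a]" using FC unfolding onephase_def by auto
    have op2: "onephase P (arz_fan P n c b)" using l2 unfolding onephase_def goodc_def by auto
    have Ge: "(a, c) \<in> Ge P"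
    proof -
      have "a \<in> Omega_f1 P \<or> a \<in> Omega_f2 P" using FC(1) unfolding Omega_f1_def Omega_f2_def Omega_f_def by auto
      then show ?thesis
      proof
        assume a1: "a \<in> Omega_f1 P"
        then have "w2 P c = Wc P" using cc f_w2(2)[OF S FC(1)] by auto
        then show ?thesis using a1 cc unfolding Ge_def G1_def by auto
      next
        assume a2: "a \<in> Omega_f2 P"
        then have "w2 P c = w2 P a" using cc f_w2(3)[OF S FC(1)] by auto
        then show ?thesis using a2 cc unfolding Ge_def G2_def by auto
      qed
    qed
    have pt: "\<And>f. f \<in> set (fan_fronts x L) \<Longrightarrow> isPT P f \<Longrightarrow> f = (x, a, c)"
      using fan_two(2)[OF S _ _ op1 op2, where x=x] l2 unfolding Lc by auto
    have cnt1: "cnt P (fan_fronts x L) \<le> 1" using fan_two(1)[OF S _ _ op1 op2, where x=x] l2 unfolding Lc by auto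
    have geok: "\<forall>f\<in>set (fan_fronts x L). isPT P f \<longrightarrow> (fst (snd f), snd (snd f)) \<in> Ge P"
      using pt Ge by fastforce
    moreover have "fanok P n a (fan_fronts x L) b"
      by (rule gen) (use Lc l2 a goodc_Good geok in auto)
    ultimately show ?thesis using cnt1 by simp
  next
    case CF
    have ga: "goodc P n a" using a CF fnc Good_cases by blast
    have ac: "a \<in> Omega_c P" using CF by simp
    have w: "Wc P \<le> w2 P a" "w2 P a \<le> Wmax P" using c_w2[OF S ac] by auto
    define m1 where "m1 = mkc P (w2 P a) (Vc P)"
    define m2 where "m2 = (rho_f P (w2 P a), vf P (rho_f P (w2 P a)))"
    have m1c: "m1 \<in> Omega_c P" "w2 P m1 = w2 P a"
      using mkc_c[OF S w _ order.refl] standingD(4)[OF S] unfolding m1_def by auto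
    have gm1: "goodc P n m1" using m1c gVc unfolding goodc_def m1_def mkc_def by auto
    have rf: "Rf1 P \<le> fst m2" "fst m2 \<le> Rf2 P" "snd m2 + pr P (fst m2) = w2 P a" "snd m2 = vf P (fst m2)"
      using rho_f_props[OF S w] unfolding m2_def by auto
    have m2f: "m2 \<in> Omega_f P"
      using rf vf_props(2)[OF S, of 0 "fst m2"] vf_props(2)[OF S, of "fst m2" "Rf2 P"] standingD(1)[OF S]
      unfolding Omega_f_def Vmax_def VF_def by (cases m2) auto
    have m22: "m2 \<in> Omega_f2 P" using m2f rf unfolding Omega_f2_def by auto
    have w2m2: "w2 P m2 = w2 P a" using f_w2(3)[OF S m2f m22] rf by simp
    have Ge: "(m1, m2) \<in> Ge P"
      using m1c m22 w2m2 unfolding Ge_def G3_def m1_def mkc_def by auto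
    have L1: "arz_fan P n a m1 \<noteq> [] \<and> hd (arz_fan P n a m1) = a \<and> last (arz_fan P n a m1) = m1 \<and>
              (\<forall>x\<in>set (arz_fan P n a m1). goodc P n x)" by (rule arzfan[OF S ga gm1])
    have L2: "L2 \<noteq> [] \<and> hd L2 = m2 \<and> last L2 = b \<and> (\<forall>x\<in>set L2. x \<in> Omega_f P)"
      by (rule lwrfan[OF m2f CF(2)]) (use CF(3) m2_def in simp)
    have Le: "L = arz_fan P n a m1 @ L2" using CF(4) unfolding m1_def mkc_def by simp
    have op1: "onephase P (arz_fan P n a m1)" using L1 unfolding onephase_def goodc_def by auto
    have op2: "onephase P L2" using L2 unfolding onephase_def by auto
    have pt: "\<And>f. f \<in> set (fan_fronts x L) \<Longrightarrow> isPT P f \<Longrightarrow> f = (x, m1, m2)"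
      using fan_two(2)[OF S _ _ op1 op2, where x=x] L1 L2 unfolding Le by auto
    have cnt1: "cnt P (fan_fronts x L) \<le> 1" using fan_two(1)[OF S _ _ op1 op2, where x=x] L1 L2 unfolding Le by auto
    have geok: "\<forall>f\<in>set (fan_fronts x L). isPT P f \<longrightarrow> (fst (snd f), snd (snd f)) \<in> Ge P"
      using pt Ge by fastforce
    have hdL: "hd L = a" using Le L1 by simp
    have lastL: "last L = b" using Le L2 by simp
    have gL: "\<forall>y\<in>set L. Good P n y" using Le L1 L2 goodc_Good unfolding Good_def by fastforce
    moreover have "fanok P n a (fan_fronts x L) b"
      by (rule gen) (use Le L1 hdL lastL gL geok in auto)
    ultimately show ?thesis using cnt1 by simp
  qed
qed

lemma cross_iff: "standing P \<Longrightarrow> Good P n x \<Longrightarrow> Good P n y \<Longrightarrow>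
   cross P x y \<longleftrightarrow> (x \<in> Omega_c P) \<noteq> (y \<in> Omega_c P)"
  unfolding cross_def Good_def using f_not_c by blast

lemma parity:
  assumes S: "standing P"
  shows "chainfrom a fs b \<Longrightarrow> (\<forall>f\<in>set fs. Good P n (fst (snd f)) \<and> Good P n (snd (snd f)))
    \<Longrightarrow> Good P n a \<Longrightarrow> Good P n b \<Longrightarrow> (odd (cnt P fs) \<longleftrightarrow> cross P a b)"
proof (induction fs arbitrary: a)
  case Nil then show ?case using cross_iff[OF S] by (simp add: cnt_def)
next
  case (Cons f fs)
  define c where "c = snd (snd f)"
  have gc: "Good P n c" using Cons.prems unfolding c_def by auto
  have ih: "odd (cnt P fs) \<longleftrightarrow> cross P c b" using Cons gc unfolding c_def by auto
  have pt: "isPT P f \<longleftrightarrow> cross P a c" using Cons.prems unfolding isPT_def c_def by auto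
  have "cnt P (f # fs) = (if isPT P f then Suc (cnt P fs) else cnt P fs)" by (simp add: cnt_def)
  then show ?case using ih pt cross_iff[OF S] Cons.prems(3,4) gc by auto
qed

lemma cnt_append[simp]: "cnt P (xs @ ys) = cnt P xs + cnt P ys" by (simp add: cnt_def)

lemma fanok_append: "fanok P n a (xs @ ys) b \<longleftrightarrow> (\<exists>c. fanok P n a xs c \<and> fanok P n c ys b)"
  unfolding fanok_def chainfrom_append by auto

definition Rgh :: "prm \<Rightarrow> nat \<Rightarrow> front list \<Rightarrow> front list \<Rightarrow> bool" where
  "Rgh P n g h \<longleftrightarrow> (\<forall>a b. fanok P n a g b \<longrightarrow> fanok P n a h b \<and> cnt P h \<le> cnt P g
     \<and> (odd (cnt P h) \<longleftrightarrow> odd (cnt P g)) \<and> (cnt P h < cnt P g \<longleftrightarrow> interacting g \<and> 2 \<le> cnt P g))"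

lemma list_repl:
  assumes "list_all2 (Rgh P n) gs hs"
  shows "fanok P n a (concat gs) b \<Longrightarrow> fanok P n a (concat hs) b \<and> cnt P (concat hs) \<le> cnt P (concat gs)
     \<and> (odd (cnt P (concat hs)) \<longleftrightarrow> odd (cnt P (concat gs)))
     \<and> (cnt P (concat hs) < cnt P (concat gs) \<longleftrightarrow> (\<exists>g\<in>set gs. interacting g \<and> 2 \<le> cnt P g))"
  using assms
proof (induction gs arbitrary: hs a)
  case Nil then show ?case by simp
next
  case (Cons g gs)
  then obtain h hs' where hs: "hs = h # hs'" "Rgh P n g h" "list_all2 (Rgh P n) gs hs'"
    by (cases hs) auto
  from Cons.prems(1) obtain c where c: "fanok P n a g c" "fanok P n c (concat gs) b"
    by (auto simp: fanok_append)
  have r: "fanok P n a h c \<and> cnt P h \<le> cnt P g \<and> (odd (cnt P h) \<longleftrightarrow> odd (cnt P g))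
         \<and> (cnt P h < cnt P g \<longleftrightarrow> interacting g \<and> 2 \<le> cnt P g)"
    using hs(2) c(1) unfolding Rgh_def by blast
  have ih: "fanok P n c (concat hs') b \<and> cnt P (concat hs') \<le> cnt P (concat gs)
     \<and> (odd (cnt P (concat hs')) \<longleftrightarrow> odd (cnt P (concat gs)))
     \<and> (cnt P (concat hs') < cnt P (concat gs) \<longleftrightarrow> (\<exists>g\<in>set gs. interacting g \<and> 2 \<le> cnt P g))"
    using Cons.IH[OF c(2) hs(3)] .
  have f: "fanok P n a (concat hs) b" unfolding hs concat.simps fanok_append using r ih by blast
  have e1: "cnt P (concat hs) = cnt P h + cnt P (concat hs')" unfolding hs by simp
  have e2: "cnt P (concat (g # gs)) = cnt P g + cnt P (concat gs)" by simp
  have l: "cnt P (concat hs) < cnt P (concat (g # gs)) \<longleftrightarrow> cnt P h < cnt P g \<or> cnt P (concat hs') < cnt P (concat gs)"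
    unfolding e1 e2 using r ih by linarith
  have o: "odd (cnt P (concat hs)) \<longleftrightarrow> odd (cnt P (concat (g # gs)))"
    unfolding e1 e2 using r ih by simp
  have A: "cnt P (concat hs) \<le> cnt P (concat (g # gs))" unfolding e1 e2 using r ih by linarith
  have B: "(\<exists>g'\<in>set (g # gs). interacting g' \<and> 2 \<le> cnt P g') \<longleftrightarrow>
      (cnt P h < cnt P g \<or> cnt P (concat hs') < cnt P (concat gs))" using r ih by auto
  show ?case using f A o l B by blast
qed

lemma concat_grp: "concat (grp X fs) = fs"
  by (induction fs) (auto split: list.split)

lemma chainfrom_map_snd: "chainfrom a (map (\<lambda>f. (X f, snd f)) g) b = chainfrom a g b"
  by (induction g arbitrary: a) auto

lemma chainfrom_ends: "chainfrom a g b \<Longrightarrow> g \<noteq> [] \<Longrightarrow> a = fst (snd (hd g)) \<and> b = snd (snd (last g))"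
proof (induction g arbitrary: a)
  case (Cons f g) then show ?case by (cases g) auto
qed simp

lemma Rgh_nonint: "\<not> interacting g \<Longrightarrow> Rgh P n g (map (\<lambda>f. (X f, snd f)) g)"
proof -
  assume ni: "\<not> interacting g"
  have c: "cnt P (map (\<lambda>f. (X f, snd f)) g) = cnt P g"
    unfolding cnt_def by (induction g) (auto simp: isPT_def)
  have "fanok P n a (map (\<lambda>f. (X f, snd f)) g) b = fanok P n a g b" for a b
    unfolding fanok_def chainfrom_map_snd by (auto simp: isPT_def)
  then show ?thesis unfolding Rgh_def using c ni by auto
qed

lemma Rgh_int:
  assumes S: "standing P" and i: "interacting g"
    and R: "Rn_sol P n (fst (snd (hd g))) (snd (snd (last g))) L"
  shows "Rgh P n g (fan_fronts x L)"
  unfolding Rgh_def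
proof (intro allI impI)
  fix a b assume fo: "fanok P n a g b"
  have ne: "g \<noteq> []" using i unfolding interacting_def by auto
  have ab: "a = fst (snd (hd g))" "b = snd (snd (last g))"
    using chainfrom_ends[of a g b] fo ne unfolding fanok_def by auto
  have ga: "Good P n a" "Good P n b" using fo ne hd_in_set last_in_set unfolding fanok_def ab by blast+
  have r: "fanok P n a (fan_fronts x L) b \<and> cnt P (fan_fronts x L) \<le> 1"
    using rnsol[OF S ga R[folded ab]] .
  have p1: "odd (cnt P g) \<longleftrightarrow> cross P a b"
    using parity[OF S] fo ga unfolding fanok_def by blast
  have p2: "odd (cnt P (fan_fronts x L)) \<longleftrightarrow> cross P a b"
    using parity[OF S] r ga unfolding fanok_def by blast
  have "cnt P (fan_fronts x L) = 0 \<or> cnt P (fan_fronts x L) = 1" using r by auto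
  then show "fanok P n a (fan_fronts x L) b \<and> cnt P (fan_fronts x L) \<le> cnt P g \<and>
         (odd (cnt P (fan_fronts x L)) = odd (cnt P g)) \<and>
         (cnt P (fan_fronts x L) < cnt P g) = (interacting g \<and> 2 \<le> cnt P g)"
    using r p1 p2 i by (auto, presburger+)
qed

lemma step_lemma:
  assumes S: "standing P" and fo: "fanok P n a fs b" and st: "step_ok P n t0 t1 fs fs'"
  shows "fanok P n a fs' b \<and> cnt P fs' \<le> cnt P fs \<and> (odd (cnt P fs') \<longleftrightarrow> odd (cnt P fs))
     \<and> (cnt P fs' < cnt P fs \<longleftrightarrow> (\<exists>g\<in>set (grp (\<lambda>f. fpos t0 f t1) fs). interacting g \<and> 2 \<le> cnt P g))"
proof -
  define X where "X = (\<lambda>f. fpos t0 f t1)"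
  define gs where "gs = grp X fs"
  obtain Ls where Ls: "length Ls = length gs"
    "\<forall>i<length gs. interacting (gs ! i) \<longrightarrow>
            Rn_sol P n (fst (snd (hd (gs ! i)))) (snd (snd (last (gs ! i)))) (Ls ! i)"
    "fs' = concat (map (\<lambda>i. if interacting (gs ! i)
                               then fan_fronts (X (hd (gs ! i))) (Ls ! i)
                               else map (\<lambda>f. (X f, snd f)) (gs ! i)) [0..<length gs])"
    using st unfolding step_ok_def Let_def X_def gs_def by blast
  define hs where "hs = map (\<lambda>i. if interacting (gs ! i)
                               then fan_fronts (X (hd (gs ! i))) (Ls ! i)
                               else map (\<lambda>f. (X f, snd f)) (gs ! i)) [0..<length gs]"
  have la: "list_all2 (Rgh P n) gs hs"
    unfolding list_all2_conv_all_nth hs_def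
    using Ls(2) Rgh_int[OF S] Rgh_nonint by auto
  have e: "fs' = concat hs" using Ls(3) hs_def by simp
  have "fanok P n a (concat gs) b" using fo unfolding gs_def concat_grp .
  from list_repl[OF la this] show ?thesis
    unfolding e using gs_def X_def by (simp add: concat_grp)
qed

lemma init_lemma:
  assumes S: "standing P" and G: "\<forall>i\<le>length ys. Good P n (vs ! i)"
    and R: "\<forall>i<length ys. Rn_sol P n (vs ! i) (vs ! Suc i) (Ls ! i)"
  shows "m \<le> length ys \<Longrightarrow>
    fanok P n (vs ! 0) (concat (map (\<lambda>i. fan_fronts (ys ! i) (Ls ! i)) [0..<m])) (vs ! m) \<and>
    cnt P (concat (map (\<lambda>i. fan_fronts (ys ! i) (Ls ! i)) [0..<m])) = card {i. i < m \<and> cross P (vs ! i) (vs ! Suc i)}"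
proof (induction m)
  case 0 then show ?case by (simp add: fanok_def cnt_def)
next
  case (Suc m)
  have m: "m < length ys" using Suc by simp
  have g: "Good P n (vs ! m)" "Good P n (vs ! Suc m)" using G m by auto
  have r: "fanok P n (vs ! m) (fan_fronts (ys ! m) (Ls ! m)) (vs ! Suc m) \<and> cnt P (fan_fronts (ys ! m) (Ls ! m)) \<le> 1"
    using rnsol[OF S g] R m by blast
  have p: "odd (cnt P (fan_fronts (ys ! m) (Ls ! m))) \<longleftrightarrow> cross P (vs ! m) (vs ! Suc m)"
    using parity[OF S] r g unfolding fanok_def by blast
  have c1: "cnt P (fan_fronts (ys ! m) (Ls ! m)) = (if cross P (vs ! m) (vs ! Suc m) then 1 else 0)"
    using r p by (cases "cnt P (fan_fronts (ys ! m) (Ls ! m))") auto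
  have se: "{i. i < Suc m \<and> cross P (vs ! i) (vs ! Suc i)} =
     (if cross P (vs ! m) (vs ! Suc m) then insert m {i. i < m \<and> cross P (vs ! i) (vs ! Suc i)}
      else {i. i < m \<and> cross P (vs ! i) (vs ! Suc i)})" by (auto simp: less_Suc_eq)
  note ih = Suc.IH[OF less_imp_le[OF m]]
  have e: "concat (map (\<lambda>i. fan_fronts (ys ! i) (Ls ! i)) [0..<Suc m]) =
     concat (map (\<lambda>i. fan_fronts (ys ! i) (Ls ! i)) [0..<m]) @ fan_fronts (ys ! m) (Ls ! m)" by simp
  have f: "fanok P n (vs ! 0) (concat (map (\<lambda>i. fan_fronts (ys ! i) (Ls ! i)) [0..<Suc m])) (vs ! Suc m)"
    unfolding e fanok_append using ih r by blast
  have fin: "finite {i. i < m \<and> cross P (vs ! i) (vs ! Suc i)}" by simp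
  show ?case using f ih c1 card_insert_disjoint[OF fin] unfolding se e by auto
qed

lemma good_of_Omega_n: "standing P \<Longrightarrow> u \<in> Omega_n P n \<Longrightarrow> Good P n u"
proof -
  assume S: "standing P" and u: "u \<in> Omega_n P n"
  then have "u \<in> Omega_f P \<or> u \<in> Omega_c P" unfolding Omega_n_def Omega_def by auto
  moreover have "u \<in> Omega_c P \<Longrightarrow> gridv P n (snd u)"
  proof -
    assume c: "u \<in> Omega_c P"
    then have "snd u \<in> Vgrid P n" using u unfolding Omega_n_def w1_def by auto
    moreover have "snd u \<noteq> VF P" using c standingD(5)[OF S] unfolding Omega_c_def by auto
    ultimately show ?thesis unfolding Vgrid_def gridv_def by auto
  qed
  ultimately show ?thesis unfolding Good_def by auto
qed

lemma cntlt:
  fixes ys :: "real list"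
  assumes so: "sorted_wrt (<) ys" and i: "i \<le> length ys"
    and lo: "0 < i \<longrightarrow> ys ! (i - 1) < x" and hi: "i < length ys \<longrightarrow> x \<le> ys ! i"
  shows "length (filter (\<lambda>y. y < x) ys) = i"
proof -
  have "{j. j < length ys \<and> ys ! j < x} = {..<i}"
  proof (intro set_eqI iffI)
    fix j assume "j \<in> {j. j < length ys \<and> ys ! j < x}"
    then have j: "j < length ys" "ys ! j < x" by auto
    show "j \<in> {..<i}"
    proof (rule ccontr)
      assume "j \<notin> {..<i}"
      then have "i \<le> j" by auto
      then have "ys ! i \<le> ys ! j" using so j(1) sorted_wrt_nth_less[OF so, of i j]
        by (cases "i = j") auto
      then show False using hi j i \<open>i \<le> j\<close> by auto
    qed
  next
    fix j assume "j \<in> {..<i}"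
    then have j: "j < i" by auto
    then have "j = i - 1 \<or> (j < i - 1 \<and> i - 1 < length ys)" using i by arith
    then have "ys ! j \<le> ys ! (i - 1)" using sorted_wrt_nth_less[OF so, of j "i - 1"] by auto
    then show "j \<in> {j. j < length ys \<and> ys ! j < x}" using lo j i by auto
  qed
  then show ?thesis unfolding length_filter_conv_card by simp
qed

lemma notin_ys:
  fixes ys :: "real list"
  assumes so: "sorted_wrt (<) ys" and i: "i \<le> length ys"
    and lo: "0 < i \<longrightarrow> ys ! (i - 1) < y" and hi: "i < length ys \<longrightarrow> y < ys ! i"
  shows "y \<notin> set ys"
proof
  assume "y \<in> set ys"
  then obtain j where j: "j < length ys" "y = ys ! j" by (auto simp: in_set_conv_nth)
  show False
  proof (cases "j < i")
    case True
    then have "j = i - 1 \<or> (j < i - 1 \<and> i - 1 < length ys)" using i by arith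
    then have "ys ! j \<le> ys ! (i - 1)" using sorted_wrt_nth_less[OF so, of j "i - 1"] by auto
    then show False using lo j True by auto
  next
    case False
    then have "ys ! i \<le> ys ! j" using j sorted_wrt_nth_less[OF so, of i j] by (cases "i = j") auto
    then show False using hi j False by auto
  qed
qed

lemma ubar_val:
  fixes ys :: "real list"
  assumes so: "sorted_wrt (<) ys" and U: "\<forall>x. x \<notin> set ys \<longrightarrow> ubar x = vs ! length (filter (\<lambda>y. y < x) ys)"
    and i: "i \<le> length ys"
    and lo: "0 < i \<longrightarrow> ys ! (i - 1) < y" and hi: "i < length ys \<longrightarrow> y < ys ! i"
  shows "ubar y = vs ! i"
proof -
  have hi': "i < length ys \<longrightarrow> y \<le> ys ! i" using hi by auto
  show ?thesis using U notin_ys[OF so i lo hi] cntlt[OF so i lo hi'] by auto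
qed

lemma ys_gap: "sorted_wrt (<) (ys::real list) \<Longrightarrow> 0 < i \<Longrightarrow> i < length ys \<Longrightarrow> ys ! (i - 1) < ys ! i"
  using sorted_wrt_nth_less[of "(<)" ys "i - 1" i] by auto

lemma ys_gap_old: "sorted_wrt (<) ys \<Longrightarrow> 0 < i \<Longrightarrow> i < length ys \<Longrightarrow> ys ! (i - 1) < ys ! i"
  using sorted_wrt_nth_less[of "(<)" ys "i - 1" i] by auto

lemma vs_good:
  fixes ys :: "real list"
  assumes S: "standing P" and so: "sorted_wrt (<) ys"
    and U: "\<forall>x. x \<notin> set ys \<longrightarrow> ubar x = vs ! length (filter (\<lambda>y. y < x) ys)"
    and O: "\<forall>x. ubar x \<in> Omega_n P n" and i: "i \<le> length ys"
  shows "Good P n (vs ! i)"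
proof -
  have "\<exists>y. (0 < i \<longrightarrow> ys ! (i - 1) < y) \<and> (i < length ys \<longrightarrow> y < ys ! i)"
  proof (cases "0 < i")
    case True
    show ?thesis
    proof (cases "i < length ys")
      case True2: True
      show ?thesis using ys_gap[OF so True True2]
        by (intro exI[of _ "(ys ! (i - 1) + ys ! i) / 2"]) auto
    next
      case False then show ?thesis by (intro exI[of _ "ys ! (i - 1) + 1"]) auto
    qed
  next
    case False then show ?thesis by (intro exI[of _ "ys ! i - 1"]) auto
  qed
  then obtain y where "(0 < i \<longrightarrow> ys ! (i - 1) < y)" "(i < length ys \<longrightarrow> y < ys ! i)" by blast
  then have "ubar y = vs ! i" using ubar_val[OF so U i] by blast
  then show ?thesis using good_of_Omega_n[OF S] O by metis
qed

lemma left_val: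
  fixes ys :: "real list"
  assumes so: "sorted_wrt (<) ys" and U: "\<forall>x. x \<notin> set ys \<longrightarrow> ubar x = vs ! length (filter (\<lambda>y. y < x) ys)"
    and i: "i \<le> length ys" and lo: "0 < i \<longrightarrow> ys ! (i - 1) < x" and hi: "i < length ys \<longrightarrow> x \<le> ys ! i"
    and d: "d > 0" and H: "\<forall>y. x - d < y \<and> y < x \<longrightarrow> ubar y = a"
  shows "a = vs ! i"
proof -
  define g where "g = (if 0 < i then x - ys ! (i - 1) else 1)"
  have g: "g > 0" using lo unfolding g_def by auto
  define y where "y = x - min (d/2) (g/2)"
  have y: "x - d < y" "y < x" using d g unfolding y_def by auto
  have yg: "x - g/2 \<le> y" unfolding y_def by simp
  have lo': "0 < i \<longrightarrow> ys ! (i - 1) < y" using yg lo unfolding g_def by (auto simp: field_simps)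
  have hi': "i < length ys \<longrightarrow> y < ys ! i" using hi y by auto
  show ?thesis using H y ubar_val[OF so U i lo' hi'] by auto
qed

lemma right_val:
  fixes ys :: "real list"
  assumes so: "sorted_wrt (<) ys" and U: "\<forall>x. x \<notin> set ys \<longrightarrow> ubar x = vs ! length (filter (\<lambda>y. y < x) ys)"
    and i: "i \<le> length ys" and lo: "0 < i \<longrightarrow> ys ! (i - 1) \<le> x" and hi: "i < length ys \<longrightarrow> x < ys ! i"
    and d: "d > 0" and H: "\<forall>y. x < y \<and> y < x + d \<longrightarrow> ubar y = b"
  shows "b = vs ! i"
proof -
  define g where "g = (if i < length ys then ys ! i - x else 1)"
  have g: "g > 0" using hi unfolding g_def by auto
  define y where "y = x + min (d/2) (g/2)"
  have y: "x < y" "y < x + d" using d g unfolding y_def by auto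
  have yg: "y \<le> x + g/2" unfolding y_def by simp
  have hi': "i < length ys \<longrightarrow> y < ys ! i" using yg hi unfolding g_def by (auto simp: field_simps)
  have lo': "0 < i \<longrightarrow> ys ! (i - 1) < y" using lo y by auto
  show ?thesis using H y ubar_val[OF so U i lo' hi'] by auto
qed

lemma pos_idx:
  fixes ys :: "real list"
  shows "\<exists>i\<le>length ys. (0 < i \<longrightarrow> ys ! (i - 1) < x) \<and> (i < length ys \<longrightarrow> x \<le> ys ! i)"
proof -
  define Q where "Q = (\<lambda>i. i = length ys \<or> x \<le> ys ! i)"
  define i where "i = (LEAST i. Q i)"
  have Qi: "Q i" unfolding i_def by (rule LeastI[of Q "length ys"]) (simp add: Q_def)
  have il: "i \<le> length ys" unfolding i_def by (rule Least_le) (simp add: Q_def)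
  have "0 < i \<longrightarrow> \<not> Q (i - 1)" unfolding i_def using not_less_Least[of "i - 1" Q] i_def by auto
  then have "0 < i \<longrightarrow> ys ! (i - 1) < x" unfolding Q_def using il by auto
  moreover have "i < length ys \<longrightarrow> x \<le> ys ! i" using Qi unfolding Q_def by auto
  ultimately show ?thesis using il by blast
qed

lemma jumps_card:
  fixes ys :: "real list"
  assumes S: "standing P" and so: "sorted_wrt (<) ys"
    and U: "\<forall>x. x \<notin> set ys \<longrightarrow> ubar x = vs ! length (filter (\<lambda>y. y < x) ys)"
  shows "card {x. \<exists>a b. pc_jump ubar x a b \<and> cross P a b} = card {i. i < length ys \<and> cross P (vs ! i) (vs ! Suc i)}"
proof -
  define I where "I = {i. i < length ys \<and> cross P (vs ! i) (vs ! Suc i)}"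
  have caa: "\<And>a. \<not> cross P a a" unfolding cross_def using f_not_c[OF S] by blast
  have eq: "{x. \<exists>a b. pc_jump ubar x a b \<and> cross P a b} = (\<lambda>i. ys ! i) ` I"
  proof (intro set_eqI iffI)
    fix x assume "x \<in> {x. \<exists>a b. pc_jump ubar x a b \<and> cross P a b}"
    then obtain a b d1 d2 where cr: "cross P a b" and d1: "d1 > 0" "\<forall>y. x - d1 < y \<and> y < x \<longrightarrow> ubar y = a"
      and d2: "d2 > 0" "\<forall>y. x < y \<and> y < x + d2 \<longrightarrow> ubar y = b"
      unfolding pc_jump_def by blast
    obtain i where i: "i \<le> length ys" "0 < i \<longrightarrow> ys ! (i - 1) < x" "i < length ys \<longrightarrow> x \<le> ys ! i"
      using pos_idx by blast
    have a: "a = vs ! i" using left_val[OF so U i d1] .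
    show "x \<in> (\<lambda>i. ys ! i) ` I"
    proof (cases "i < length ys \<and> x = ys ! i")
      case True
      have lo: "0 < Suc i \<longrightarrow> ys ! (Suc i - 1) \<le> x" using True by simp
      have hi: "Suc i < length ys \<longrightarrow> x < ys ! Suc i" using True sorted_wrt_nth_less[OF so, of i "Suc i"] by auto
      have b: "b = vs ! Suc i" using right_val[OF so U _ lo hi d2] True by auto
      show ?thesis using True a b cr unfolding I_def by auto
    next
      case False
      have lo: "0 < i \<longrightarrow> ys ! (i - 1) \<le> x" using i by auto
      have hi: "i < length ys \<longrightarrow> x < ys ! i" using i False by auto
      have b: "b = vs ! i" using right_val[OF so U i(1) lo hi d2] .
      then show ?thesis using a cr caa by simp
    qed
  next
    fix x assume "x \<in> (\<lambda>i. ys ! i) ` I"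
    then obtain i where i: "i < length ys" "cross P (vs ! i) (vs ! Suc i)" "x = ys ! i" unfolding I_def by auto
    define d1 where "d1 = (if 0 < i then x - ys ! (i - 1) else 1)"
    define d2 where "d2 = (if Suc i < length ys then ys ! Suc i - x else 1)"
    have d1p: "d1 > 0" unfolding d1_def using ys_gap[OF so _ i(1)] i(3) by auto
    have d2p: "d2 > 0" unfolding d2_def using sorted_wrt_nth_less[OF so, of i "Suc i"] i(3) by auto
    have L: "\<forall>y. x - d1 < y \<and> y < x \<longrightarrow> ubar y = vs ! i"
    proof (intro allI impI)
      fix y assume y: "x - d1 < y \<and> y < x"
      show "ubar y = vs ! i"
        by (rule ubar_val[OF so U]) (use i y d1_def in auto)
    qed
    have R: "\<forall>y. x < y \<and> y < x + d2 \<longrightarrow> ubar y = vs ! Suc i"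
    proof (intro allI impI)
      fix y assume y: "x < y \<and> y < x + d2"
      show "ubar y = vs ! Suc i"
        by (rule ubar_val[OF so U]) (use i y d2_def in auto)
    qed
    have "pc_jump ubar x (vs ! i) (vs ! Suc i)" unfolding pc_jump_def using L R d1p d2p by blast
    then show "x \<in> {x. \<exists>a b. pc_jump ubar x a b \<and> cross P a b}" using i by blast
  qed
  have inj: "inj_on (\<lambda>i. ys ! i) I"
  proof (rule inj_onI)
    fix i j assume "i \<in> I" "j \<in> I" "ys ! i = ys ! j"
    then show "i = j" using sorted_wrt_nth_less[OF so, of i j] sorted_wrt_nth_less[OF so, of j i]
      unfolding I_def by (metis less_irrefl nat_neq_iff mem_Collect_eq)
  qed
  show ?thesis using eq card_image[OF inj] by (simp add: I_def)
qed

lemma fronts_at_eq: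
  assumes sm: "strict_mono tau" and k: "tau k < t" "t \<le> tau (Suc k)"
  shows "fronts_at tau C t = C k"
proof -
  have "(LEAST j. t \<le> tau (Suc j)) = k"
  proof (rule Least_equality)
    show "t \<le> tau (Suc k)" by (rule k(2))
    fix j assume j: "t \<le> tau (Suc j)"
    show "k \<le> j"
    proof (rule ccontr)
      assume "\<not> k \<le> j"
      then have "Suc j \<le> k" by simp
      then have "tau (Suc j) \<le> tau k" using sm by (simp add: strict_mono_less_eq)
      then show False using j k by simp
    qed
  qed
  then show ?thesis unfolding fronts_at_def by simp
qed

lemma time_idx:
  fixes tau :: "nat \<Rightarrow> real"
  assumes t0: "tau 0 = 0" and sm: "strict_mono tau" and lim: "filterlim tau at_top sequentially"
    and t: "0 < t"
  shows "\<exists>k. tau k < t \<and> t \<le> tau (Suc k)"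
proof -
  have "\<forall>Z. eventually (\<lambda>j. Z \<le> tau j) sequentially" using filterlim_at_top[of tau sequentially] lim by simp
  then have "eventually (\<lambda>j. t \<le> tau j) sequentially" by blast
  then obtain j where j: "t \<le> tau j" by (auto simp: eventually_sequentially)
  define m where "m = (LEAST j. t \<le> tau j)"
  have m: "t \<le> tau m" unfolding m_def by (rule LeastI[of _ j]) (rule j)
  have m0: "m \<noteq> 0" proof assume "m = 0" then show False using m t t0 by simp qed
  have lt: "m - 1 < m" using m0 by simp
  have "\<not> t \<le> tau (m - 1)" using not_less_Least[of "m - 1" "\<lambda>j. t \<le> tau j"] lt m_def by simp
  then show ?thesis using m m0 by (intro exI[of _ "m - 1"]) auto
qed

theorem lemma2:
  fixes P :: prm and n :: nat and ubar :: "real \<Rightarrow> state"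
    and ys :: "real list" and vs :: "state list"
    and tau :: "nat \<Rightarrow> real" and C :: "nat \<Rightarrow> front list"
  assumes "standing P"
    and "\<forall>x. ubar x \<in> Omega_n P n"
    and "sorted_wrt (<) ys" and "length vs = Suc (length ys)"
    and "\<forall>x. x \<notin> set ys \<longrightarrow> ubar x = vs ! length (filter (\<lambda>y. y < x) ys)"
    and "wft P n ys vs tau C"
  shows "(\<forall>t>0. \<forall>f\<in>set (fronts_at tau C t).
            isPT P f \<longrightarrow> (fst (snd f), snd (snd f)) \<in> Ge P)
       \<and> (\<forall>t s. 0 \<le> t \<and> t \<le> s \<longrightarrow> NPT P ubar tau C s \<le> NPT P ubar tau C t)
       \<and> (\<forall>t>0. (\<exists>d>0. \<forall>s. t < s \<and> s < t + d \<longrightarrow> NPT P ubar tau C s < NPT P ubar tau C t)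
                 \<longleftrightarrow> PT_interact P tau C t)
       \<and> (\<forall>t s. 0 \<le> t \<and> t \<le> s \<longrightarrow> even (NPT P ubar tau C t - NPT P ubar tau C s))"
proof -
  note S = assms(1) and O = assms(2) and so = assms(3) and U = assms(5)
  from assms(6) have t0: "tau 0 = 0" and sm: "strict_mono tau" and lim: "filterlim tau at_top sequentially"
    and stp: "\<And>k. step_ok P n (tau k) (tau (Suc k)) (C k) (C (Suc k))"
    unfolding wft_def by auto
  from assms(6) obtain Ls where Ls: "length Ls = length ys"
    "\<forall>i<length ys. Rn_sol P n (vs ! i) (vs ! Suc i) (Ls ! i)"
    "C 0 = concat (map (\<lambda>i. fan_fronts (ys ! i) (Ls ! i)) [0..<length ys])"
    unfolding wft_def by blast
  have G: "\<forall>i\<le>length ys. Good P n (vs ! i)" using vs_good[OF S so U O] by blast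
  define a0 where "a0 = vs ! 0"
  define b0 where "b0 = vs ! length ys"
  define N where "N k = cnt P (C k)" for k
  have init: "fanok P n a0 (C 0) b0 \<and> N 0 = card {i. i < length ys \<and> cross P (vs ! i) (vs ! Suc i)}"
    using init_lemma[OF S G Ls(2) order.refl] unfolding Ls(3) a0_def b0_def N_def by simp
  have inv: "fanok P n a0 (C k) b0" for k
  proof (induction k)
    case 0 then show ?case using init by simp
  next
    case (Suc k) then show ?case using step_lemma[OF S Suc stp] by simp
  qed
  have stepN: "N (Suc k) \<le> N k \<and> (odd (N (Suc k)) \<longleftrightarrow> odd (N k)) \<and>
     (N (Suc k) < N k \<longleftrightarrow> (\<exists>g\<in>set (grp (\<lambda>f. fpos (tau k) f (tau (Suc k))) (C k)). interacting g \<and> 2 \<le> cnt P g))" for k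
    using step_lemma[OF S inv stp] unfolding N_def by blast
  have antiN: "k \<le> j \<Longrightarrow> N j \<le> N k \<and> (odd (N j) \<longleftrightarrow> odd (N k))" for k j
  proof (induction j rule: dec_induct)
    case base then show ?case by simp
  next
    case (step j) then show ?case using stepN[of j] by auto
  qed
  have NPT0: "NPT P ubar tau C 0 = N 0"
    using init jumps_card[OF S so U] unfolding NPT_def by simp
  have tpos: "0 \<le> tau k" for k using sm t0 by (metis le0 strict_mono_less_eq)
  have NPTk: "tau k < t \<Longrightarrow> t \<le> tau (Suc k) \<Longrightarrow> NPT P ubar tau C t = N k" for k t
  proof -
    assume a: "tau k < t" "t \<le> tau (Suc k)"
    have "t \<noteq> 0" using a(1) tpos[of k] by auto
    then show ?thesis using fronts_at_eq[OF sm a, of C] unfolding NPT_def N_def cnt_def by simp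
  qed
  have idx: "0 < t \<Longrightarrow> \<exists>k. tau k < t \<and> t \<le> tau (Suc k)" for t using time_idx[OF t0 sm lim] by blast
  have ord: "tau k < t \<Longrightarrow> t \<le> tau (Suc k) \<Longrightarrow> tau j < s \<Longrightarrow> s \<le> tau (Suc j) \<Longrightarrow> t \<le> s \<Longrightarrow> k \<le> j" for k j t s
  proof (rule ccontr)
    assume a: "tau k < t" "t \<le> tau (Suc k)" "tau j < s" "s \<le> tau (Suc j)" "t \<le> s" "\<not> k \<le> j"
    then have "Suc j \<le> k" by simp
    then have "tau (Suc j) \<le> tau k" using sm by (simp add: strict_mono_less_eq)
    then show False using a by simp
  qed
  have par: "0 \<le> t \<Longrightarrow> NPT P ubar tau C t \<le> N 0 \<and> (odd (NPT P ubar tau C t) \<longleftrightarrow> odd (N 0))" for t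
  proof (cases "t = 0")
    case True then show ?thesis using NPT0 by simp
  next
    case False
    assume "0 \<le> t"
    then obtain k where "tau k < t" "t \<le> tau (Suc k)" using idx False by force
    then show ?thesis using NPTk antiN[of 0 k] by simp
  qed
  have mono: "0 \<le> t \<Longrightarrow> t \<le> s \<Longrightarrow> NPT P ubar tau C s \<le> NPT P ubar tau C t" for t s
  proof (cases "t = 0")
    case True then show "0 \<le> t \<Longrightarrow> t \<le> s \<Longrightarrow> ?thesis" using par NPT0 by simp
  next
    case False
    assume ts: "0 \<le> t" "t \<le> s"
    obtain k where k: "tau k < t" "t \<le> tau (Suc k)" using idx False ts by force
    obtain j where j: "tau j < s" "s \<le> tau (Suc j)" using idx False ts by force
    have "k \<le> j" by (rule ord[OF k j ts(2)])
    then show ?thesis using NPTk[OF k] NPTk[OF j] antiN by simp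
  qed
  have c1: "\<forall>t>0. \<forall>f\<in>set (fronts_at tau C t). isPT P f \<longrightarrow> (fst (snd f), snd (snd f)) \<in> Ge P"
  proof (intro allI impI ballI)
    fix t f assume t: "0 < t" and f: "f \<in> set (fronts_at tau C t)" and pt: "isPT P f"
    obtain k where k: "tau k < t" "t \<le> tau (Suc k)" using idx t by blast
    show "(fst (snd f), snd (snd f)) \<in> Ge P"
      using inv[of k] f pt fronts_at_eq[OF sm k] unfolding fanok_def by auto
  qed
  have c3: "(\<exists>d>0. \<forall>s. t < s \<and> s < t + d \<longrightarrow> NPT P ubar tau C s < NPT P ubar tau C t)
                 \<longleftrightarrow> PT_interact P tau C t" if t: "0 < t" for t
  proof -
    obtain k where k: "tau k < t" "t \<le> tau (Suc k)" using idx t by blast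
    have Nt: "NPT P ubar tau C t = N k" by (rule NPTk[OF k])
    show ?thesis
    proof (cases "t = tau (Suc k)")
      case True
      have nxt: "tau (Suc k) < tau (Suc (Suc k))" using sm by (simp add: strict_mono_less)
      have Ns: "t < s \<Longrightarrow> s \<le> tau (Suc (Suc k)) \<Longrightarrow> NPT P ubar tau C s = N (Suc k)" for s
        using NPTk[of "Suc k" s] True by simp
      have PTi: "PT_interact P tau C t \<longleftrightarrow> N (Suc k) < N k"
      proof
        assume "PT_interact P tau C t"
        then obtain k' g where k': "tau (Suc k') = t" "g \<in> set (grp (\<lambda>f. fpos (tau k') f t) (C k'))"
          "interacting g" "2 \<le> length (filter (isPT P) g)" unfolding PT_interact_def by blast
        have "Suc k' = Suc k" using k'(1) True sm by (metis strict_mono_eq)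
        then have "k' = k" by simp
        then show "N (Suc k) < N k" using stepN[of k] k' True unfolding cnt_def by auto
      next
        assume "N (Suc k) < N k"
        then obtain g where "g \<in> set (grp (\<lambda>f. fpos (tau k) f (tau (Suc k))) (C k))" "interacting g" "2 \<le> cnt P g"
          using stepN[of k] by blast
        then show "PT_interact P tau C t" unfolding PT_interact_def cnt_def using True by blast
      qed
      show ?thesis
      proof
        assume "\<exists>d>0. \<forall>s. t < s \<and> s < t + d \<longrightarrow> NPT P ubar tau C s < NPT P ubar tau C t"
        then obtain d where d: "d > 0" "\<forall>s. t < s \<and> s < t + d \<longrightarrow> NPT P ubar tau C s < NPT P ubar tau C t" by blast
        define e where "e = min d (tau (Suc (Suc k)) - t)"
        define s where "s = t + e / 2"
        have mm: "e \<le> tau (Suc (Suc k)) - t" "e \<le> d"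
          "0 < e" using d nxt True unfolding e_def by auto
        have s1: "t < s" unfolding s_def using mm by linarith
        have s2: "s < t + d" unfolding s_def using mm by linarith
        have s3: "s \<le> tau (Suc (Suc k))" unfolding s_def using mm by linarith
        note s = s1 s2 s3
        then have "N (Suc k) < N k" using d(2) Ns Nt by metis
        then show "PT_interact P tau C t" using PTi by simp
      next
        assume "PT_interact P tau C t"
        then have lt: "N (Suc k) < N k" using PTi by simp
        show "\<exists>d>0. \<forall>s. t < s \<and> s < t + d \<longrightarrow> NPT P ubar tau C s < NPT P ubar tau C t"
          using lt Ns Nt nxt True by (intro exI[of _ "tau (Suc (Suc k)) - t"]) auto
      qed
    next
      case False
      then have lt: "t < tau (Suc k)" using k by simp
      have noPT: "\<not> PT_interact P tau C t"
      proof
        assume "PT_interact P tau C t"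
        then obtain k' where k': "tau (Suc k') = t" unfolding PT_interact_def by blast
        have "k < Suc k'" using k k' sm by (metis strict_mono_less)
        moreover have "Suc k' < Suc k" using lt k' sm by (metis strict_mono_less)
        ultimately show False by simp
      qed
      have "\<not> (\<exists>d>0. \<forall>s. t < s \<and> s < t + d \<longrightarrow> NPT P ubar tau C s < NPT P ubar tau C t)"
      proof
        assume "\<exists>d>0. \<forall>s. t < s \<and> s < t + d \<longrightarrow> NPT P ubar tau C s < NPT P ubar tau C t"
        then obtain d where d: "d > 0" "\<forall>s. t < s \<and> s < t + d \<longrightarrow> NPT P ubar tau C s < NPT P ubar tau C t" by blast
        define e where "e = min d (tau (Suc k) - t)"
        define s where "s = t + e / 2"
        have mm: "e \<le> tau (Suc k) - t" "e \<le> d"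
          "0 < e" using d lt unfolding e_def by auto
        have s1: "t < s" unfolding s_def using mm by linarith
        have s2: "s < t + d" unfolding s_def using mm by linarith
        have s3: "s \<le> tau (Suc k)" unfolding s_def using mm by linarith
        note s = s1 s2 s3
        have "NPT P ubar tau C s = N k" using NPTk[of k s] s k by simp
        then show False using d(2) s Nt by fastforce
      qed
      then show ?thesis using noPT by simp
    qed
  qed
  have c4: "0 \<le> t \<Longrightarrow> t \<le> s \<Longrightarrow> even (NPT P ubar tau C t - NPT P ubar tau C s)" for t s
  proof -
    assume ts: "0 \<le> t" "t \<le> s"
    have "NPT P ubar tau C s \<le> NPT P ubar tau C t" using mono ts by blast
    moreover have "odd (NPT P ubar tau C s) \<longleftrightarrow> odd (NPT P ubar tau C t)" using par ts by auto
    ultimately show ?thesis by (auto simp: even_diff_nat)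
  qed
  show ?thesis using c1 mono c3 c4 by blast
qed

end
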